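(* There is an absolute constant $\bar\epsilon>0$ with the following property. Let $T>0$, $\delta_1>0$, and let $a,b,c$ be real-valued bounded functions on $[0,T]\times\mathbb R^n\times\mathbb R^n$ such that $b(t,x,\xi)\ge\delta_1 t$, $|ac|\le\bar\epsilon\,b^2$ and $|c|\le\bar\epsilon\,b^{3/2}$ everywhere. Then there exists $\epsilon_1>0$ such that the symmetric matrix $S-\epsilon_1 t\,\mathrm{diag}(1,1,b)$ is positive semidefinite at every $(t,x,\xi)\in[0,T]\times\mathbb R^n\times\mathbb R^n$, where $$S=\frac13\begin{pmatrix}3&2a&-b\\ 2a&2(a^2+b)&-ab-3c\\ -b&-ab-3c&b^2-2ac\end{pmatrix}.$$ *)

theory Defs
  imports "HOL-Analysis.Analysis"
begin

definition psd3 :: "real^3^3 \<Rightarrow> bool" where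
  "psd3 M \<longleftrightarrow> (\<forall>v::real^3. 0 \<le> v \<bullet> (M *v v))"

definition S_mat :: "real \<Rightarrow> real \<Rightarrow> real \<Rightarrow> real^3^3" where
  "S_mat a b c = (1/3) *\<^sub>R vector [
     vector [3, 2*a, -b],
     vector [2*a, 2*(a^2 + b), -a*b - 3*c],
     vector [-b, -a*b - 3*c, b^2 - 2*a*c]]"

definition diag3 :: "real \<Rightarrow> real \<Rightarrow> real \<Rightarrow> real^3^3" where
  "diag3 d1 d2 d3 = vector [vector [d1, 0, 0], vector [0, d2, 0], vector [0, 0, d3]]"

text \<open>R^n represented as functions nat => real vanishing at indices \<ge> n.\<close>
definition Rn :: "nat \<Rightarrow> (nat \<Rightarrow> real) set" where
  "Rn n = {x. \<forall>i\<ge>n. x i = 0}"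

end

theory Submission
  imports Defs
begin

lemma qf: "v \<bullet> ((S_mat a b c - k *\<^sub>R diag3 1 1 b) *v v) =
  (1/3)*(3*(v$1)^2 + 4*a*(v$1)*(v$2) - 2*b*(v$1)*(v$3) + 2*(a^2+b)*(v$2)^2 + 2*(-a*b-3*c)*(v$2)*(v$3) + (b^2-2*a*c)*(v$3)^2)
   - k*((v$1)^2 + (v$2)^2 + b*(v$3)^2)"
  unfolding S_mat_def diag3_def
  apply (simp add: inner_vec_def matrix_vector_mult_def sum_3 power2_eq_square algebra_simps)
  apply (simp add: field_simps)
  done

lemma key:
  fixes a b c x y z :: real
  assumes b: "b \<ge> 0" and ac: "\<bar>a*c\<bar> \<le> b^2/10" and cc: "\<bar>c\<bar> \<le> b * sqrt b/10"
  shows "3*x^2 + 4*a*x*y - 2*b*x*z + 2*(a^2+b)*y^2 + 2*(-a*b-3*c)*y*z + (b^2-2*a*c)*z^2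
     \<ge> x^2 + b*y^2 + b^2*z^2/5"
proof -
  define u where "u = x + a*y - b*z"
  have eq: "3*x^2 + 4*a*x*y - 2*b*x*z + 2*(a^2+b)*y^2 + 2*(-a*b-3*c)*y*z + (b^2-2*a*c)*z^2
     = u^2 + x^2 + (x+a*y)^2 + 2*b*y^2 - 6*c*y*z - 2*a*c*z^2"
    unfolding u_def by (simp add: power2_eq_square algebra_simps)
  have s1: "u^2 + (x+a*y)^2 \<ge> b^2*z^2/2"
  proof -
    have "b*z = (x+a*y) - u" unfolding u_def by simp
    hence "b^2*z^2 = ((x+a*y) - u)^2" by (metis power_mult_distrib)
    also have "\<dots> \<le> 2*(u^2 + (x+a*y)^2)"
      using sum_squares_ge_zero[of "x+a*y+u" 0] by (simp add: power2_eq_square algebra_simps)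
    finally show ?thesis by simp
  qed
  have s2: "2*a*c*z^2 \<le> b^2*z^2/5"
  proof -
    have "2*a*c*z^2 \<le> 2*\<bar>a*c\<bar>*z^2" by (simp add: mult_right_mono)
    also have "\<dots> \<le> 2*(b^2/10)*z^2" using ac using mult_right_mono[OF ac zero_le_power2[of z]] by simp
    finally show ?thesis by simp
  qed
  have s3: "6*c*y*z \<le> b*y^2 + (9/100)*b^2*z^2"
  proof -
    have "6*c*y*z \<le> 6*\<bar>c\<bar>*\<bar>y\<bar>*\<bar>z\<bar>" using abs_ge_self[of "c*y*z"] by (simp add: abs_mult)
    also have "\<dots> \<le> 6*(b * sqrt b/10)*\<bar>y\<bar>*\<bar>z\<bar>" by (intro mult_right_mono mult_left_mono) (use cc in auto)
    also have "\<dots> \<le> b*y^2 + (9/100)*b^2*z^2"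
    proof -
      have sb: "(sqrt b)^2 = b" using b by simp
      have "0 \<le> (sqrt b * \<bar>y\<bar> - (3/10)*b*\<bar>z\<bar>)^2" by simp
      hence "0 \<le> (sqrt b)^2*y^2 - 2*(sqrt b * \<bar>y\<bar>)*((3/10)*b*\<bar>z\<bar>) + (9/100)*b^2*z^2"
        by (simp add: power2_diff power_mult_distrib power_divide)
      moreover have "6*(b * sqrt b/10)*\<bar>y\<bar>*\<bar>z\<bar> = 2*(sqrt b * \<bar>y\<bar>)*((3/10)*b*\<bar>z\<bar>)" by simp
      ultimately show ?thesis unfolding sb by linarith
    qed
    finally show ?thesis .
  qed
  have "0 \<le> b^2*z^2" by simp
  then show ?thesis unfolding eq using s1 s2 s3 b by linarith
qed
lemma powr32: "(b::real) \<ge> 0 \<Longrightarrow> b powr (3/2) = b * sqrt b"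
proof (cases "b = 0")
  case False
  assume "b \<ge> 0"
  hence bp: "b > 0" using False by simp
  have "b powr (3/2) = b powr (1 + 1/2)" by simp
  also have "\<dots> = b powr 1 * b powr (1/2)" by (rule powr_add)
  also have "\<dots> = b * sqrt b" using bp by (simp add: powr_half_sqrt)
  finally show ?thesis .
qed simp

lemma pointwise:
  fixes a b c t e dl T :: real
  assumes t: "0 \<le> t" "t \<le> T" and T: "T > 0" and d: "dl > 0"
    and e: "e = min dl (1/T) / 15"
    and bt: "b \<ge> dl * t" and ac: "\<bar>a*c\<bar> \<le> (1/10) * b^2"
    and cc: "\<bar>c\<bar> \<le> (1/10) * b powr (3/2)"
  shows "psd3 (S_mat a b c - (e * t) *\<^sub>R diag3 1 1 b)"
  unfolding psd3_def
proof
  fix v :: "real^3"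
  define x y z where "x = v$1" "y = v$2" "z = v$3"
  have b0: "b \<ge> 0" using bt d t by (smt (verit) mult_nonneg_nonneg)
  have K: "3*x^2 + 4*a*x*y - 2*b*x*z + 2*(a^2+b)*y^2 + 2*(-a*b-3*c)*y*z + (b^2-2*a*c)*z^2
     \<ge> x^2 + b*y^2 + b^2*z^2/5"
    by (rule key) (use b0 ac cc powr32[OF b0] in auto)
  have e1: "e * t \<le> 1/15"
  proof -
    have "e \<le> (1/T)/15" using e by simp
    hence "e * t \<le> (1/T)/15 * T" using t by (intro mult_mono) (auto simp: e d T)
    thus ?thesis using T by simp
  qed
  have e2: "e * t \<le> b/15"
  proof -
    have "e \<le> dl/15" using e by simp
    hence "e * t \<le> dl/15 * t" using t by (intro mult_right_mono) auto
    thus ?thesis using bt by simp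
  qed
  have f1: "e*t*x^2 \<le> x^2/15" using mult_right_mono[OF e1 zero_le_power2[of x]] by simp
  have f2: "e*t*y^2 \<le> b*y^2/15" using mult_right_mono[OF e2 zero_le_power2[of y]] by simp
  have f3: "e*t*(b*z^2) \<le> b^2*z^2/15" using mult_right_mono[OF e2, of "b*z^2"] b0
    by (simp add: power2_eq_square)
  have "0 \<le> b*y^2" "0 \<le> b^2*z^2" "0 \<le> x^2" using b0 by simp_all
  show "0 \<le> v \<bullet> ((S_mat a b c - (e * t) *\<^sub>R diag3 1 1 b) *v v)"
  proof -
    define P where "P = 3*x^2 + 4*a*x*y - 2*b*x*z + 2*(a^2+b)*y^2 + 2*(-a*b-3*c)*y*z + (b^2-2*a*c)*z^2"
    define E where "E = e*t"
    have K': "x^2 + b*y^2 + b^2*z^2/5 \<le> P" using K unfolding P_def .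
    have f1': "E*x^2 \<le> x^2/15" using f1 unfolding E_def .
    have f2': "E*y^2 \<le> b*y^2/15" using f2 unfolding E_def .
    have f3': "E*(b*z^2) \<le> b^2*z^2/15" using f3 unfolding E_def .
    have dd: "E*(x^2+y^2+b*z^2) = E*x^2+E*y^2+E*(b*z^2)" by (simp add: algebra_simps)
    have "0 \<le> (1/3)*P - E*(x^2+y^2+b*z^2)"
      unfolding dd using K' f1' f2' f3' \<open>0 \<le> b*y^2\<close> \<open>0 \<le> b^2*z^2\<close> \<open>0 \<le> x^2\<close> by linarith
    thus ?thesis unfolding qf x_y_z_def[symmetric] P_def E_def by simp
  qed
qed

theorem mainTheorem4:
  shows "\<exists>eps_bar::real. eps_bar > 0 \<and>
    (\<forall>(n::nat) (T::real) (\<delta>1::real)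
        (a::real \<Rightarrow> (nat \<Rightarrow> real) \<Rightarrow> (nat \<Rightarrow> real) \<Rightarrow> real) b c.
      T > 0 \<longrightarrow> \<delta>1 > 0 \<longrightarrow>
      (\<exists>K. \<forall>t\<in>{0..T}. \<forall>x\<in>Rn n. \<forall>\<xi>\<in>Rn n.
          \<bar>a t x \<xi>\<bar> \<le> K \<and> \<bar>b t x \<xi>\<bar> \<le> K \<and> \<bar>c t x \<xi>\<bar> \<le> K) \<longrightarrow>
      (\<forall>t\<in>{0..T}. \<forall>x\<in>Rn n. \<forall>\<xi>\<in>Rn n.
          b t x \<xi> \<ge> \<delta>1 * t \<and>
          \<bar>a t x \<xi> * c t x \<xi>\<bar> \<le> eps_bar * (b t x \<xi>)^2 \<and>
          \<bar>c t x \<xi>\<bar> \<le> eps_bar * (b t x \<xi>) powr (3/2)) \<longrightarrow>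
      (\<exists>eps1::real. eps1 > 0 \<and>
        (\<forall>t\<in>{0..T}. \<forall>x\<in>Rn n. \<forall>\<xi>\<in>Rn n.
          psd3 (S_mat (a t x \<xi>) (b t x \<xi>) (c t x \<xi>)
                - (eps1 * t) *\<^sub>R diag3 1 1 (b t x \<xi>)))))"
proof (rule exI[of _ "1/10"], intro conjI allI impI)
  fix n :: nat and T \<delta>1 :: real and a b c :: "real \<Rightarrow> (nat \<Rightarrow> real) \<Rightarrow> (nat \<Rightarrow> real) \<Rightarrow> real"
  assume T: "T > 0" and d: "\<delta>1 > 0"
    and H: "\<forall>t\<in>{0..T}. \<forall>x\<in>Rn n. \<forall>\<xi>\<in>Rn n.
          b t x \<xi> \<ge> \<delta>1 * t \<and>
          \<bar>a t x \<xi> * c t x \<xi>\<bar> \<le> 1/10 * (b t x \<xi>)^2 \<and>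
          \<bar>c t x \<xi>\<bar> \<le> 1/10 * (b t x \<xi>) powr (3/2)"
  show "\<exists>eps1::real. eps1 > 0 \<and>
        (\<forall>t\<in>{0..T}. \<forall>x\<in>Rn n. \<forall>\<xi>\<in>Rn n.
          psd3 (S_mat (a t x \<xi>) (b t x \<xi>) (c t x \<xi>)
                - (eps1 * t) *\<^sub>R diag3 1 1 (b t x \<xi>)))"
  proof (rule exI[of _ "min \<delta>1 (1/T) / 15"], intro conjI ballI)
    show "min \<delta>1 (1/T) / 15 > 0" using T d by simp
  next
    fix t x \<xi> assume t: "t \<in> {0..T}" and x: "x \<in> Rn n" and xi: "\<xi> \<in> Rn n"
    show "psd3 (S_mat (a t x \<xi>) (b t x \<xi>) (c t x \<xi>)
                - (min \<delta>1 (1/T) / 15 * t) *\<^sub>R diag3 1 1 (b t x \<xi>))"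
      using H t x xi T d by (intro pointwise[where T=T and dl=\<delta>1]) auto
  qed
qed (simp)

end
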